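(* Let $m,n\in\mathbb{N}$, $T=\{1,\dots,m\}$, $\mathcal{F}(A,b)=\{x\in\mathbb{R}^n\mid Ax\le b\}$ for $(A,b)\in\mathbb{R}^{m\times n}\times\mathbb{R}^m$, and let $(\bar A,\bar b)$ be such that $\mathcal{F}(\bar A,\bar b)$ is nonempty and unbounded. Then: (i) if $\mathcal{F}(\bar A,\bar b)=\mathbb{R}^n$, then $\operatorname{Lipusc}\mathcal{F}(\bar A,\bar b)=0$; (ii) if $n=1$ and $\mathcal{F}(\bar A,\bar b)$ equals $]-\infty,\bar x]$ or $[\bar x,+\infty[$ for some $\bar x\in\mathbb{R}$, then $$\operatorname{Lipusc}\mathcal{F}(\bar A,\bar b)=\frac{\|\bar x\|+1}{\max\{\|\bar a_t\|_*:\ t\in T_{\bar A,\bar b}(\bar x)\}};$$ (iii) otherwise, $\operatorname{Lipusc}\mathcal{F}(\bar A,\bar b)=+\infty$.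
   Context: $\mathbb{R}^n$ carries an arbitrary norm $\|\cdot\|$ with dual norm $\|u\|_*=\max_{\|x\|\le1}|u'x|$; the parameter space $\mathbb{R}^{m\times n}\times\mathbb{R}^m$ carries the norm $\|(A,b)\|=\max_{t\in T}\max\{\|a_t\|_*,|b_t|\}$, where $a_t'$ is the $t$-th row of $A$ (and $\bar a_t'$ the $t$-th row of $\bar A$). $T_{A,b}(x)=\{t\in T\mid a_t'x=b_t\}$ is the set of active indices at $x$. $\operatorname{dist}(x,\Omega)=\inf_{\omega\in\Omega}\|x-\omega\|$ with $\inf\emptyset=+\infty$. For $\mathcal{F}(\bar A,\bar b)\neq\emptyset$, $\operatorname{Lipusc}\mathcal{F}(\bar A,\bar b)$ is the infimum of all $\kappa\ge0$ for which there is a neighborhood $V$ of $(\bar A,\bar b)$ with $\operatorname{dist}(x,\mathcal{F}(\bar A,\bar b))\le\kappa\|(A,b)-(\bar A,\bar b)\|$ for all $(A,b)\in V$ and all $x\in\mathcal{F}(A,b)$ (infimum of the empty set is $+\infty$). *)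

theory Defs
  imports "HOL-Analysis.Analysis"
begin

definition is_norm :: "(real^'n \<Rightarrow> real) \<Rightarrow> bool" where
  "is_norm N \<longleftrightarrow> (\<forall>x. 0 \<le> N x) \<and> (\<forall>x. N x = 0 \<longleftrightarrow> x = 0)
     \<and> (\<forall>c x. N (c *\<^sub>R x) = \<bar>c\<bar> * N x) \<and> (\<forall>x y. N (x + y) \<le> N x + N y)"

definition dual_norm :: "(real^'n \<Rightarrow> real) \<Rightarrow> real^'n \<Rightarrow> real" where
  "dual_norm N u = Sup {\<bar>u \<bullet> x\<bar> | x. N x \<le> 1}"

definition param_norm ::
  "(real^'n \<Rightarrow> real) \<Rightarrow> real^'n^'m::finite \<Rightarrow> real^'m \<Rightarrow> real" where
  "param_norm N A b = Max (range (\<lambda>t. max (dual_norm N (A $ t)) \<bar>b $ t\<bar>))"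

definition feas :: "real^'n^'m \<Rightarrow> real^'m \<Rightarrow> (real^'n) set" where
  "feas A b = {x. \<forall>t. (A $ t) \<bullet> x \<le> b $ t}"

definition active :: "real^'n^'m \<Rightarrow> real^'m \<Rightarrow> real^'n \<Rightarrow> 'm set" where
  "active A b x = {t. (A $ t) \<bullet> x = b $ t}"

text \<open>Distance from a point to a set w.r.t. N, with inf of the empty set = +infinity.\<close>
definition ndist :: "(real^'n \<Rightarrow> real) \<Rightarrow> real^'n \<Rightarrow> (real^'n) set \<Rightarrow> ereal" where
  "ndist N x \<Omega> = Inf ((\<lambda>\<omega>. ereal (N (x - \<omega>))) ` \<Omega>)"

text \<open>Lipschitz upper semicontinuity modulus of the feasible set mapping at (A0,b0).
  Neighborhoods are w.r.t. the parameter norm (balls suffice).\<close>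
definition Lipusc :: "(real^'n \<Rightarrow> real) \<Rightarrow> real^'n^'m::finite \<Rightarrow> real^'m \<Rightarrow> ereal" where
  "Lipusc N A0 b0 = Inf (ereal ` {\<kappa>. 0 \<le> \<kappa> \<and> (\<exists>\<epsilon>>0. \<forall>A b.
      param_norm N (A - A0) (b - b0) < \<epsilon> \<longrightarrow>
      (\<forall>x\<in>feas A b. ndist N x (feas A0 b0) \<le> ereal (\<kappa> * param_norm N (A - A0) (b - b0))))})"

end

theory Submission
  imports Defs
begin


lemma isn_0: "is_norm N \<Longrightarrow> N 0 = 0" by (simp add: is_norm_def)
lemma isn_nonneg: "is_norm N \<Longrightarrow> 0 \<le> N x" by (simp add: is_norm_def)
lemma isn_scale: "is_norm N \<Longrightarrow> N (c *\<^sub>R x) = \<bar>c\<bar> * N x" by (simp add: is_norm_def)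
lemma isn_tri: "is_norm N \<Longrightarrow> N (x + y) \<le> N x + N y" by (simp add: is_norm_def)
lemma isn_eq0: "is_norm N \<Longrightarrow> N x = 0 \<longleftrightarrow> x = 0" by (simp add: is_norm_def)
lemma isn_minus: "is_norm N \<Longrightarrow> N (- x) = N x"
  using isn_scale[of N "-1" x] by simp
lemma isn_sub_comm: "is_norm N \<Longrightarrow> N (x - y) = N (y - x)"
  using isn_minus[of N "x - y"] by simp

lemma isn_sum: assumes "is_norm N" "finite S" shows "N (sum f S) \<le> (\<Sum>i\<in>S. N (f i))"
  using assms(2)
proof (induction S rule: finite_induct)
  case empty then show ?case using isn_0[OF assms(1)] by simp
next
  case (insert i S)
  then show ?case using isn_tri[OF assms(1), of "f i" "sum f S"] by simp
qed

lemma N_upper: fixes N :: "real^'n \<Rightarrow> real" assumes "is_norm N"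
  shows "\<exists>B\<ge>0. \<forall>x. N x \<le> B * norm x"
proof (intro exI[of _ "\<Sum>i\<in>UNIV. N (axis i (1::real))"] conjI allI)
  show "0 \<le> (\<Sum>i\<in>UNIV. N (axis i (1::real)))" by (intro sum_nonneg isn_nonneg[OF assms])
  fix x :: "real^'n"
  have "N x = N (\<Sum>i\<in>UNIV. (x$i) *\<^sub>R axis i 1)"
    using basis_expansion[of x] by (simp add: scalar_mult_eq_scaleR)
  also have "\<dots> \<le> (\<Sum>i\<in>UNIV. N ((x$i) *\<^sub>R axis i 1))" by (rule isn_sum[OF assms]) simp
  also have "\<dots> = (\<Sum>i\<in>UNIV. \<bar>x$i\<bar> * N (axis i 1))" by (simp add: isn_scale[OF assms])
  also have "\<dots> \<le> (\<Sum>i\<in>UNIV. norm x * N (axis i 1))"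
    by (intro sum_mono mult_right_mono component_le_norm_cart isn_nonneg[OF assms])
  also have "\<dots> = (\<Sum>i\<in>UNIV. N (axis i (1::real))) * norm x" by (simp add: sum_distrib_left mult.commute)
  finally show "N x \<le> (\<Sum>i\<in>UNIV. N (axis i (1::real))) * norm x" .
qed

lemma N_cont: fixes N :: "real^'n \<Rightarrow> real" assumes "is_norm N"
  shows "continuous_on UNIV N"
proof -
  obtain B where B: "B \<ge> 0" "\<forall>x. N x \<le> B * norm x" using N_upper[OF assms] by blast
  have lip: "\<bar>N x - N y\<bar> \<le> B * dist x y" for x y
  proof -
    have "N x \<le> N (x - y) + N y" using isn_tri[OF assms, of "x - y" y] by simp
    moreover have "N y \<le> N (y - x) + N x" using isn_tri[OF assms, of "y - x" x] by simp
    moreover have "N (y - x) = N (x - y)" using isn_sub_comm[OF assms] by simp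
    moreover have "N (x - y) \<le> B * dist x y" using B by (simp add: dist_norm)
    ultimately show ?thesis by linarith
  qed
  show ?thesis unfolding continuous_on_iff
  proof (intro ballI allI impI)
    fix x and e :: real assume "e > 0"
    show "\<exists>d>0. \<forall>x'\<in>UNIV. dist x' x < d \<longrightarrow> dist (N x') (N x) < e"
    proof (intro exI[of _ "e / (B + 1)"] conjI ballI impI)
      show "e / (B + 1) > 0" using \<open>e > 0\<close> B by simp
      fix x' assume "dist x' x < e / (B + 1)"
      hence "(B + 1) * dist x' x < e" using B by (simp add: field_simps)
      moreover have "B * dist x' x \<le> (B + 1) * dist x' x" by (simp add: algebra_simps)
      ultimately show "dist (N x') (N x) < e" using lip[of x' x] by (simp add: dist_real_def)
    qed
  qed
qed

lemma N_lower: fixes N :: "real^'n \<Rightarrow> real" assumes "is_norm N"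
  shows "\<exists>m>0. \<forall>x. m * norm x \<le> N x"
proof -
  have "sphere (0::real^'n) 1 \<noteq> {}"
  proof -
    obtain i :: 'n where True by simp
    have "axis i (1::real) \<in> sphere 0 1" by simp
    thus ?thesis by blast
  qed
  then obtain x0 where x0: "x0 \<in> sphere 0 1" "\<forall>y\<in>sphere 0 1. N x0 \<le> N y"
    using continuous_attains_inf[OF compact_sphere _ continuous_on_subset[OF N_cont[OF assms]]]
    by blast
  have "x0 \<noteq> 0" using x0(1) by auto
  hence pos: "N x0 > 0" using isn_eq0[OF assms, of x0] isn_nonneg[OF assms, of x0] by linarith
  show ?thesis
  proof (intro exI[of _ "N x0"] conjI allI pos)
    fix x :: "real^'n"
    show "N x0 * norm x \<le> N x"
    proof (cases "x = 0")
      case True then show ?thesis by (simp add: isn_0[OF assms])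
    next
      case False
      have "(1 / norm x) *\<^sub>R x \<in> sphere 0 1" using False by simp
      hence "N x0 \<le> N ((1 / norm x) *\<^sub>R x)" using x0 by blast
      also have "\<dots> = N x / norm x" using False by (simp add: isn_scale[OF assms])
      finally show ?thesis using False by (simp add: field_simps)
    qed
  qed
qed

lemma dual_le: fixes N :: "real^'n \<Rightarrow> real" assumes "is_norm N" "m > 0" "\<forall>x. m * norm x \<le> N x"
  shows "dual_norm N u \<le> norm u / m"
  unfolding dual_norm_def
proof (rule cSup_least)
  show "{\<bar>u \<bullet> x\<bar> |x. N x \<le> 1} \<noteq> {}" using isn_0[OF assms(1)] by (auto intro!: exI[of _ 0])
  fix v assume "v \<in> {\<bar>u \<bullet> x\<bar> |x. N x \<le> 1}"
  then obtain x where x: "v = \<bar>u \<bullet> x\<bar>" "N x \<le> 1" by auto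
  have "norm x \<le> 1 / m" using assms(2,3) x(2) by (smt (verit) mult.commute pos_le_divide_eq)
  have "v \<le> norm u * norm x" using x(1) Cauchy_Schwarz_ineq2 by simp
  also have "\<dots> \<le> norm u * (1 / m)" by (intro mult_left_mono \<open>norm x \<le> 1 / m\<close>) simp
  finally show "v \<le> norm u / m" by simp
qed



context
  fixes c xb :: real and a b :: "'m::finite \<Rightarrow> real"
  assumes c: "c > 0" and hF: "\<forall>y. (\<forall>t. a t * y \<le> b t) \<longleftrightarrow> y \<le> xb"
begin

lemma sc_feas: "a t * xb \<le> b t" using hF by blast

lemma sc_a_nonneg: "a t \<ge> 0"
proof (rule ccontr)
  assume "\<not> a t \<ge> 0" hence neg: "a t < 0" by simp
  define y where "y = min xb (b t / a t - 1)"
  have "y \<le> xb" by (simp add: y_def)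
  hence h1: "a t * y \<le> b t" using hF by blast
  have "y < b t / a t" by (simp add: y_def)
  hence "a t * y > b t" using neg by (metis neg_less_divide_eq mult.commute)
  with h1 show False by simp
qed

lemma sc_slack: "\<exists>S>0. \<forall>t. a t * xb \<noteq> b t \<longrightarrow> (\<bar>a t\<bar> + 1) * S \<le> b t - a t * xb"
proof -
  define S where "S = Min (insert 1 ((\<lambda>t. (b t - a t * xb) / (\<bar>a t\<bar> + 1)) ` {t. a t * xb \<noteq> b t}))"
  have fin: "finite (insert 1 ((\<lambda>t. (b t - a t * xb) / (\<bar>a t\<bar> + 1)) ` {t. a t * xb \<noteq> b t}))" by simp
  have pos: "0 < (b t - a t * xb) / (\<bar>a t\<bar> + 1)" if "a t * xb \<noteq> b t" for t
  proof -
    have "a t * xb < b t" using that sc_feas[of t] by auto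
    thus ?thesis by (simp add: add_pos_nonneg)
  qed
  have "S > 0" unfolding S_def using pos by (subst Min_gr_iff[OF fin]) auto
  moreover have "(\<bar>a t\<bar> + 1) * S \<le> b t - a t * xb" if "a t * xb \<noteq> b t" for t
  proof -
    have "S \<le> (b t - a t * xb) / (\<bar>a t\<bar> + 1)" unfolding S_def using that by (intro Min_le fin) auto
    thus ?thesis by (simp add: pos_le_divide_eq add_pos_nonneg mult.commute)
  qed
  ultimately show ?thesis by blast
qed

lemma sc_exP: "\<exists>t. a t * xb = b t \<and> a t > 0"
proof (rule ccontr)
  assume H: "\<not> (\<exists>t. a t * xb = b t \<and> a t > 0)"
  obtain S where S: "S > 0" "\<forall>t. a t * xb \<noteq> b t \<longrightarrow> (\<bar>a t\<bar> + 1) * S \<le> b t - a t * xb"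
    using sc_slack by blast
  have "\<forall>t. a t * (xb + S) \<le> b t"
  proof
    fix t
    show "a t * (xb + S) \<le> b t"
    proof (cases "a t * xb = b t")
      case True
      hence "a t = 0" using H sc_a_nonneg[of t] by force
      thus ?thesis using True by simp
    next
      case False
      hence "(\<bar>a t\<bar> + 1) * S \<le> b t - a t * xb" using S by blast
      moreover have "a t * S \<le> (\<bar>a t\<bar> + 1) * S" using S(1) by (intro mult_right_mono) auto
      ultimately show ?thesis by (simp add: algebra_simps)
    qed
  qed
  hence "xb + S \<le> xb" using hF by blast
  thus False using S by simp
qed

lemma sc_M: "\<exists>M>0. Max ((\<lambda>t. \<bar>a t\<bar> / c) ` {t. a t * xb = b t}) = M / c
   \<and> (\<exists>t. a t * xb = b t \<and> a t = M) \<and> (\<forall>t. a t * xb = b t \<longrightarrow> a t \<le> M)"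
proof -
  let ?P = "{t. a t * xb = b t}"
  have ne: "?P \<noteq> {}" using sc_exP by blast
  obtain t0 where t0: "t0 \<in> ?P" "Max ((\<lambda>t. \<bar>a t\<bar> / c) ` ?P) = \<bar>a t0\<bar> / c"
  proof -
    have "Max ((\<lambda>t. \<bar>a t\<bar> / c) ` ?P) \<in> (\<lambda>t. \<bar>a t\<bar> / c) ` ?P"
      using ne by (intro Max_in) auto
    thus ?thesis using that by blast
  qed
  have le: "\<bar>a t\<bar> / c \<le> \<bar>a t0\<bar> / c" if "t \<in> ?P" for t
  proof -
    have "\<bar>a t\<bar> / c \<le> Max ((\<lambda>t. \<bar>a t\<bar> / c) ` ?P)" using that by (intro Max_ge) auto
    thus ?thesis using t0(2) by simp
  qed
  obtain t1 where t1: "a t1 * xb = b t1" "a t1 > 0" using sc_exP by blast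
  have "0 < \<bar>a t1\<bar> / c" using t1 c by simp
  also have "\<dots> \<le> \<bar>a t0\<bar> / c" using le[of t1] t1 by simp
  finally have pos: "a t0 > 0" using c sc_a_nonneg[of t0] by (auto simp: zero_less_divide_iff)
  show ?thesis
  proof (intro exI[of _ "a t0"] conjI pos allI impI)
    show "Max ((\<lambda>t. \<bar>a t\<bar> / c) ` ?P) = a t0 / c" using t0 pos by simp
    show "\<exists>t. a t * xb = b t \<and> a t = a t0" using t0 by blast
    fix t assume "a t * xb = b t"
    hence "\<bar>a t\<bar> / c \<le> \<bar>a t0\<bar> / c" using le by simp
    hence "\<bar>a t\<bar> \<le> \<bar>a t0\<bar>" using c by (simp add: divide_le_cancel)
    thus "a t \<le> a t0" using pos by linarith
  qed
qed

lemma sc_upper: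
  assumes kap: "\<kappa> > (c * \<bar>xb\<bar> + 1) / Max ((\<lambda>t. \<bar>a t\<bar> / c) ` {t. a t * xb = b t})"
  shows "\<exists>\<epsilon>>0. \<forall>\<rho> a' b' y. 0 \<le> \<rho> \<longrightarrow> \<rho> < \<epsilon> \<longrightarrow>
     (\<forall>t. \<bar>a' t - a t\<bar> \<le> c * \<rho> \<and> \<bar>b' t - b t\<bar> \<le> \<rho>) \<longrightarrow>
     (\<forall>t. a' t * y \<le> b' t) \<longrightarrow> c * (y - xb) \<le> \<kappa> * \<rho>"
proof -
  obtain M where M: "M > 0" "Max ((\<lambda>t. \<bar>a t\<bar> / c) ` {t. a t * xb = b t}) = M / c"
    "\<exists>t. a t * xb = b t \<and> a t = M" using sc_M by blast
  obtain ts where ts: "a ts * xb = b ts" "a ts = M" using M(3) by blast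
  define K where "K = c * (c * \<bar>xb\<bar> + 1)"
  have K: "K > 0" using c by (simp add: K_def add_nonneg_pos)
  have "(c * \<bar>xb\<bar> + 1) / (M / c) = K / M" using c M(1) by (simp add: K_def field_simps)
  hence kapK: "\<kappa> > K / M" using kap by (simp only: M(2))
  have kpos: "\<kappa> > 0" using kapK divide_pos_pos[OF K M(1)] by linarith
  define Q where "Q = K / \<kappa>"
  have Q: "Q > 0" "Q < M" using K kpos kapK M(1) by (simp_all add: Q_def field_simps)
  define \<epsilon> where "\<epsilon> = (M - Q) / (2 * c)"
  have eps: "\<epsilon> > 0" using Q c by (simp add: \<epsilon>_def)
  show ?thesis
  proof (intro exI[of _ \<epsilon>] conjI eps allI impI)
    fix \<rho> a' b' y
    assume r0: "0 \<le> \<rho>" and re: "\<rho> < \<epsilon>" and B: "\<forall>t. \<bar>a' t - a t\<bar> \<le> c * \<rho> \<and> \<bar>b' t - b t\<bar> \<le> \<rho>"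
      and fy: "\<forall>t. a' t * y \<le> b' t"
    have cr1: "c * \<rho> < c * \<epsilon>" using re c by simp
    have cr2: "c * \<epsilon> * 2 = M - Q" using c by (simp add: \<epsilon>_def)
    have "\<bar>a' ts - a ts\<bar> \<le> c * \<rho>" using B by blast
    hence "a' ts \<ge> M - c * \<rho>" using ts(2) by linarith
    hence "a' ts > Q" using cr1 cr2 Q(2) by linarith
    show "c * (y - xb) \<le> \<kappa> * \<rho>"
    proof (cases "y \<le> xb")
      case True
      have "c * (y - xb) \<le> 0" using c True by (simp add: mult_nonneg_nonpos)
      moreover have "0 \<le> \<kappa> * \<rho>" using kpos r0 by simp
      ultimately show ?thesis by linarith
    next
      case False
      have e1: "a' ts * (y - xb) \<le> (b' ts - b ts) - (a' ts - a ts) * xb"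
        using fy[rule_format, of ts] ts(1) by (simp add: algebra_simps)
      have "\<bar>(a' ts - a ts) * xb\<bar> \<le> c * \<rho> * \<bar>xb\<bar>"
        unfolding abs_mult using B by (intro mult_right_mono) auto
      hence f1: "- ((a' ts - a ts) * xb) \<le> c * \<rho> * \<bar>xb\<bar>" by (rule abs_le_D2)
      have f2: "b' ts - b ts \<le> \<rho>" using B abs_le_D1 by blast
      have "a' ts * (y - xb) \<le> \<rho> + c * \<rho> * \<bar>xb\<bar>" using e1 f1 f2 by linarith
      moreover have "Q * (y - xb) \<le> a' ts * (y - xb)" using \<open>a' ts > Q\<close> False by (intro mult_right_mono) auto
      ultimately have "Q * (y - xb) \<le> \<rho> * (c * \<bar>xb\<bar> + 1)" by (simp add: algebra_simps)
      hence "y - xb \<le> \<rho> * (c * \<bar>xb\<bar> + 1) / Q" using Q by (simp add: field_simps)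
      also have "\<dots> = \<rho> * \<kappa> / c"
      proof -
        have k: "c * \<bar>xb\<bar> + 1 > 0" using c by (simp add: add_nonneg_pos)
        have "\<rho> * (c * \<bar>xb\<bar> + 1) / (c * (c * \<bar>xb\<bar> + 1) / \<kappa>) = \<rho> * \<kappa> / c"
          using k c kpos by (simp add: divide_simps)
        thus ?thesis by (simp add: Q_def K_def)
      qed
      finally have "y - xb \<le> \<rho> * \<kappa> / c" .
      hence "c * (y - xb) \<le> c * (\<rho> * \<kappa> / c)" using c by (intro mult_left_mono) auto
      thus ?thesis using c by (simp add: mult.commute)
    qed
  qed
qed

lemma sc_lower:
  assumes k0: "0 \<le> \<kappa>" and kap: "\<kappa> < (c * \<bar>xb\<bar> + 1) / Max ((\<lambda>t. \<bar>a t\<bar> / c) ` {t. a t * xb = b t})"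
    and e: "\<epsilon> > 0"
  shows "\<exists>\<rho> a' b' y. 0 < \<rho> \<and> \<rho> < \<epsilon> \<and>
     (\<forall>t. \<bar>a' t - a t\<bar> \<le> c * \<rho> \<and> \<bar>b' t - b t\<bar> \<le> \<rho>) \<and>
     (\<forall>t. a' t * y \<le> b' t) \<and> \<kappa> * \<rho> < c * (y - xb)"
proof -
  obtain M where M: "M > 0" "Max ((\<lambda>t. \<bar>a t\<bar> / c) ` {t. a t * xb = b t}) = M / c"
    "\<forall>t. a t * xb = b t \<longrightarrow> a t \<le> M" using sc_M by blast
  obtain S where S: "S > 0" "\<forall>t. a t * xb \<noteq> b t \<longrightarrow> (\<bar>a t\<bar> + 1) * S \<le> b t - a t * xb"
    using sc_slack by blast
  define K where "K = c * \<bar>xb\<bar> + 1"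
  have K: "K > 0" using c by (simp add: K_def add_nonneg_pos)
  define L where "L = c * K / M"
  have L: "(c * \<bar>xb\<bar> + 1) / Max ((\<lambda>t. \<bar>a t\<bar> / c) ` {t. a t * xb = b t}) = L"
  proof -
    have "(c * \<bar>xb\<bar> + 1) / (M / c) = L" using c M(1) by (simp add: L_def K_def field_simps)
    thus ?thesis using M(2) by simp
  qed
  have kL: "\<kappa> < L" using kap L by simp
  define \<rho> where "\<rho> = min (\<epsilon> / 2) (min (S * M / K) ((L - \<kappa>) * M / (c * (\<kappa> + 1))))"
  have rpos: "\<rho> > 0" using e S M K kL c k0 by (simp add: \<rho>_def)
  have rle1: "\<rho> \<le> S * M / K" and rle2: "\<rho> \<le> (L - \<kappa>) * M / (c * (\<kappa> + 1))" and rle4: "\<rho> \<le> \<epsilon> / 2"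
    unfolding \<rho>_def by linarith+
  have rle3: "\<rho> < \<epsilon>" using rle4 e by linarith
  define sg where "sg = (if xb \<ge> 0 then 1 else -1::real)"
  have sg: "sg * xb = \<bar>xb\<bar>" "\<bar>sg\<bar> = 1" by (auto simp: sg_def)
  define a' where "a' t = (if a t * xb = b t then a t - c * \<rho> * sg else a t)" for t
  define b' where "b' t = (if a t * xb = b t then b t + \<rho> else b t)" for t
  define h where "h = \<rho> * K / (M + c * \<rho>)"
  have hpos: "h > 0" unfolding h_def using rpos K M(1) c by (intro divide_pos_pos mult_pos_pos add_pos_pos) auto
  have hle: "h \<le> \<rho> * K / M"
    unfolding h_def using rpos K M(1) c by (intro divide_left_mono mult_nonneg_nonneg mult_pos_pos add_pos_pos) auto
  also have "\<dots> \<le> S" using rle1 K M by (simp add: field_simps)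
  finally have hS: "h \<le> S" .
  have G1: "\<forall>t. \<bar>a' t - a t\<bar> \<le> c * \<rho> \<and> \<bar>b' t - b t\<bar> \<le> \<rho>"
  proof
    fix t
    have "\<bar>c * \<rho> * sg\<bar> = c * \<rho>" using c rpos sg by (simp add: abs_mult)
    moreover have "0 \<le> c * \<rho>" using c rpos by simp
    ultimately show "\<bar>a' t - a t\<bar> \<le> c * \<rho> \<and> \<bar>b' t - b t\<bar> \<le> \<rho>" using rpos by (simp add: a'_def b'_def)
  qed
  have G2: "\<forall>t. a' t * (xb + h) \<le> b' t"
  proof
    fix t
    show "a' t * (xb + h) \<le> b' t"
    proof (cases "a t * xb = b t")
      case True
      have e1: "a' t * (xb + h) = b t - c * \<rho> * \<bar>xb\<bar> + (a t - c * \<rho> * sg) * h"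
        using True sg by (simp add: a'_def algebra_simps)
      have "\<bar>c * \<rho> * sg\<bar> = c * \<rho>" using c rpos sg by (simp add: abs_mult)
      hence "- (c * \<rho> * sg) \<le> c * \<rho>" by linarith
      hence "a t - c * \<rho> * sg \<le> M + c * \<rho>" using M(3) True by force
      hence e2: "(a t - c * \<rho> * sg) * h \<le> (M + c * \<rho>) * h" using hpos by (intro mult_right_mono) auto
      have "M + c * \<rho> > 0" using M(1) c rpos by (simp add: add_pos_pos)
      hence e3: "(M + c * \<rho>) * h = \<rho> * K" by (simp add: h_def)
      show ?thesis using e1 e2 e3 True by (simp add: b'_def K_def algebra_simps)
    next
      case False
      have "a t * h \<le> (\<bar>a t\<bar> + 1) * h" using hpos by (intro mult_right_mono) auto
      also have "\<dots> \<le> (\<bar>a t\<bar> + 1) * S" using hS by (intro mult_left_mono) auto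
      also have "\<dots> \<le> b t - a t * xb" using S False by blast
      finally show ?thesis using False by (simp add: a'_def b'_def algebra_simps)
    qed
  qed
  have G3: "\<kappa> * \<rho> < c * (xb + h - xb)"
  proof -
    have "\<kappa> * (M + c * \<rho>) < c * K"
    proof -
      have pz: "c * (\<kappa> + 1) > 0" using c k0 by simp
      have "\<rho> * (c * (\<kappa> + 1)) \<le> (L - \<kappa>) * M"
        using rle2 pz by (simp add: pos_le_divide_eq)
      hence "(\<kappa> + 1) * (c * \<rho>) \<le> (L - \<kappa>) * M" by (simp add: algebra_simps)
      moreover have "\<kappa> * (c * \<rho>) < (\<kappa> + 1) * (c * \<rho>)" using c rpos by simp
      moreover have "L * M = c * K" using M(1) by (simp add: L_def)
      ultimately show ?thesis by (simp add: algebra_simps)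
    qed
    hence "\<rho> * (\<kappa> * (M + c * \<rho>)) < \<rho> * (c * K)" using rpos
      by (rule mult_strict_left_mono)
    hence "\<kappa> * \<rho> * (M + c * \<rho>) < c * (\<rho> * K)" by (simp add: algebra_simps)
    hence "\<kappa> * \<rho> < c * (\<rho> * K) / (M + c * \<rho>)" using M(1) c rpos
      by (simp add: pos_less_divide_eq add_pos_pos)
    thus ?thesis by (simp add: h_def)
  qed
  show ?thesis by (intro exI[of _ \<rho>] exI[of _ a'] exI[of _ b'] exI[of _ "xb+h"] conjI rpos rle3 G1 G2 G3)
qed

end


lemma od_inner: fixes u x :: "real^'n" assumes "\<forall>i::'n. i = i0" shows "u \<bullet> x = u$i0 * x$i0"
proof -
  have U: "(UNIV::'n set) = {i0}" using assms by auto
  have "u \<bullet> x = (\<Sum>i\<in>UNIV. u$i * x$i)" by (simp add: inner_vec_def)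
  also have "\<dots> = (\<Sum>i\<in>{i0}. u$i * x$i)" by (simp only: U)
  finally show ?thesis by simp
qed

lemma od_vec: fixes x :: "real^'n" assumes "\<forall>i::'n. i = i0" shows "x = (x$i0) *\<^sub>R vec 1"
  using assms by (simp add: vec_eq_iff) metis

lemma od_N: fixes N :: "real^'n \<Rightarrow> real" assumes "is_norm N" "\<forall>i::'n. i = i0"
  shows "N x = \<bar>x$i0\<bar> * N (vec 1)"
  using isn_scale[OF assms(1), of "x$i0" "vec 1"] od_vec[OF assms(2), of x] by simp

lemma od_c: fixes N :: "real^'n \<Rightarrow> real" assumes "is_norm N" shows "N (vec 1) > 0"
proof -
  have "(vec 1 :: real^'n) \<noteq> 0" by (simp add: vec_eq_iff)
  thus ?thesis using isn_eq0[OF assms, of "vec 1"] isn_nonneg[OF assms, of "vec 1"] by linarith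
qed

lemma od_dual: fixes N :: "real^'n \<Rightarrow> real" assumes "is_norm N" "\<forall>i::'n. i = i0"
  shows "dual_norm N u = \<bar>u$i0\<bar> / N (vec 1)"
  unfolding dual_norm_def
proof (rule cSup_eq_maximum)
  let ?c = "N (vec 1)"
  have c: "?c > 0" by (rule od_c[OF assms(1)])
  let ?x = "(1 / ?c) *\<^sub>R (vec 1 :: real^'n)"
  have "N ?x = 1" using c by (simp add: isn_scale[OF assms(1)])
  moreover have "\<bar>u \<bullet> ?x\<bar> = \<bar>u$i0\<bar> / ?c" using c by (simp add: od_inner[OF assms(2)] abs_mult)
  ultimately show "\<bar>u$i0\<bar> / ?c \<in> {\<bar>u \<bullet> x\<bar> |x. N x \<le> 1}" by (metis (mono_tags, lifting) order_refl mem_Collect_eq)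
  show "v \<le> \<bar>u$i0\<bar> / ?c" if "v \<in> {\<bar>u \<bullet> x\<bar> |x. N x \<le> 1}" for v
  proof -
    from that obtain x where x: "v = \<bar>u \<bullet> x\<bar>" "N x \<le> 1" by auto
    have "\<bar>x$i0\<bar> * ?c \<le> 1" using x(2) od_N[OF assms, of x] by simp
    hence "\<bar>x$i0\<bar> \<le> 1 / ?c" using c by (simp add: pos_le_divide_eq)
    hence "\<bar>u$i0\<bar> * \<bar>x$i0\<bar> \<le> \<bar>u$i0\<bar> * (1 / ?c)" by (intro mult_left_mono) auto
    thus "v \<le> \<bar>u$i0\<bar> / ?c" using x(1) by (simp add: od_inner[OF assms(2)] abs_mult)
  qed
qed

lemma pn_ge: "param_norm N A b \<ge> max (dual_norm N (A $ t)) \<bar>b $ t\<bar>"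
  unfolding param_norm_def by (rule Max_ge) auto

lemma pn_le: "(\<And>t. max (dual_norm N (A $ t)) \<bar>b $ t\<bar> \<le> r) \<Longrightarrow> param_norm N A b \<le> r"
  unfolding param_norm_def by (subst Max_le_iff) auto

lemma pn_less: "(\<And>t. max (dual_norm N (A $ t)) \<bar>b $ t\<bar> < r) \<Longrightarrow> param_norm N A b < r"
  unfolding param_norm_def by (subst Max_less_iff) auto

lemma ndist_le: "\<omega> \<in> \<Omega> \<Longrightarrow> ndist N x \<Omega> \<le> ereal (N (x - \<omega>))"
  unfolding ndist_def by (rule INF_lower)

lemma ndist_ge: "(\<And>\<omega>. \<omega> \<in> \<Omega> \<Longrightarrow> B \<le> N (x - \<omega>)) \<Longrightarrow> ereal B \<le> ndist N x \<Omega>"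
  unfolding ndist_def by (rule INF_greatest) simp

lemma Inf_eq_L: fixes K :: "real set"
  assumes "\<And>\<kappa>. \<kappa> > L \<Longrightarrow> \<kappa> \<in> K" "\<And>\<kappa>. \<kappa> \<in> K \<Longrightarrow> L \<le> \<kappa>"
  shows "Inf (ereal ` K) = ereal L"
proof (rule antisym)
  show "ereal L \<le> Inf (ereal ` K)" using assms(2) by (auto intro!: Inf_greatest)
  show "Inf (ereal ` K) \<le> ereal L"
  proof (rule dense_ge)
    fix y assume "ereal L < y"
    show "Inf (ereal ` K) \<le> y"
    proof (cases y)
      case (real r)
      hence "r \<in> K" using \<open>ereal L < y\<close> assms(1) by simp
      thus ?thesis using real by (auto intro: Inf_lower)
    qed (use \<open>ereal L < y\<close> in auto)
  qed
qed



lemma part2: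
  fixes N :: "real^'n \<Rightarrow> real" and A0 :: "real^'n^'m::finite" and b0 :: "real^'m"
    and xbar :: "real^'n" and \<sigma> :: real
  assumes nN: "is_norm N" and i0: "\<forall>i::'n. i = i0" and sg: "\<sigma> * \<sigma> = 1"
    and hs: "\<forall>x. x \<in> feas A0 b0 \<longleftrightarrow> \<sigma> * x$i0 \<le> \<sigma> * xbar$i0"
  shows "Lipusc N A0 b0 = ereal ((N xbar + 1) / Max ((\<lambda>t. dual_norm N (A0 $ t)) ` active A0 b0 xbar))"
proof -
  define c where "c = N (vec 1)"
  have c: "c > 0" unfolding c_def by (rule od_c[OF nN])
  have "(\<sigma> - 1) * (\<sigma> + 1) = 0" using sg by (simp add: algebra_simps)
  hence "\<sigma> = 1 \<or> \<sigma> = -1" by (simp add: eq_neg_iff_add_eq_0)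
  hence sabs: "\<bar>\<sigma>\<bar> = 1" by auto
  define a where "a t = \<sigma> * A0$t$i0" for t
  define b where "b t = b0$t" for t
  define xb where "xb = \<sigma> * xbar$i0"
  have Nx: "N x = c * \<bar>x$i0\<bar>" for x using od_N[OF nN i0, of x] by (simp add: c_def)
  have dn: "dual_norm N u = \<bar>u$i0\<bar> / c" for u using od_dual[OF nN i0, of u] by (simp add: c_def)
  have inn: "u \<bullet> x = u$i0 * x$i0" for u x :: "real^'n" by (rule od_inner[OF i0])
  have vcomp: "((r::real) *\<^sub>R (vec 1 :: real^'n))$i0 = r" for r by simp
  have feasD: "x \<in> feas A b \<longleftrightarrow> (\<forall>t. A$t$i0 * x$i0 \<le> b$t)" for A :: "real^'n^'m" and b x
    by (simp add: feas_def inn)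
  have hF: "\<forall>y. (\<forall>t. a t * y \<le> b t) \<longleftrightarrow> y \<le> xb"
  proof
    fix y
    define x where "x = (\<sigma> * y) *\<^sub>R (vec 1 :: real^'n)"
    have xi: "x$i0 = \<sigma> * y" by (simp add: x_def)
    have "(\<forall>t. a t * y \<le> b t) \<longleftrightarrow> x \<in> feas A0 b0"
      unfolding feasD xi a_def b_def by (simp add: algebra_simps)
    also have "\<dots> \<longleftrightarrow> \<sigma> * (\<sigma> * y) \<le> xb" using hs xi by (simp add: xb_def)
    also have "\<sigma> * (\<sigma> * y) = y" using sg by (simp add: mult.assoc[symmetric])
    finally show "(\<forall>t. a t * y \<le> b t) \<longleftrightarrow> y \<le> xb" .
  qed
  define L where "L = (c * \<bar>xb\<bar> + 1) / Max ((\<lambda>t. \<bar>a t\<bar> / c) ` {t. a t * xb = b t})"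
  have RHS: "(N xbar + 1) / Max ((\<lambda>t. dual_norm N (A0 $ t)) ` active A0 b0 xbar) = L"
  proof -
    have "active A0 b0 xbar = {t. a t * xb = b t}"
      unfolding active_def a_def b_def xb_def inn using sg
      by (simp add: algebra_simps) (metis mult.assoc mult.commute mult.left_neutral)
    moreover have "\<And>t. dual_norm N (A0 $ t) = \<bar>a t\<bar> / c"
      by (simp add: dn a_def abs_mult sabs)
    moreover have "N xbar = c * \<bar>xb\<bar>" by (simp add: Nx xb_def abs_mult sabs)
    ultimately show ?thesis by (simp add: L_def)
  qed
  have Lpos: "L > 0"
  proof -
    obtain M where "M > 0" "Max ((\<lambda>t. \<bar>a t\<bar> / c) ` {t. a t * xb = b t}) = M / c"
      using sc_M[OF c hF] by blast
    thus ?thesis using c by (simp add: L_def add_nonneg_pos)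
  qed
  define K where "K = {\<kappa>. 0 \<le> \<kappa> \<and> (\<exists>\<epsilon>>0. \<forall>A b.
      param_norm N (A - A0) (b - b0) < \<epsilon> \<longrightarrow>
      (\<forall>x\<in>feas A b. ndist N x (feas A0 b0) \<le> ereal (\<kappa> * param_norm N (A - A0) (b - b0))))}"
  have pnt: "\<bar>A$t$i0 - A0$t$i0\<bar> \<le> c * param_norm N (A - A0) (B - b0)
      \<and> \<bar>B$t - b0$t\<bar> \<le> param_norm N (A - A0) (B - b0)" for A :: "real^'n^'m" and B t
  proof -
    have "max (\<bar>A$t$i0 - A0$t$i0\<bar> / c) \<bar>B$t - b0$t\<bar> \<le> param_norm N (A - A0) (B - b0)"
      using pn_ge[where N=N and A="A - A0" and b="B - b0" and t=t] by (simp add: dn)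
    thus ?thesis using c by (simp add: pos_divide_le_eq mult.commute)
  qed
  have pn0: "0 \<le> param_norm N (A - A0) (B - b0)" for A :: "real^'n^'m" and B
    using pnt[where A=A and B=B] by (meson abs_ge_zero order_trans)
  have C1: "\<kappa> \<in> K" if kL: "\<kappa> > L" for \<kappa>
  proof -
    obtain \<epsilon> where e: "\<epsilon> > 0" and H: "\<forall>\<rho> a' b' y. 0 \<le> \<rho> \<longrightarrow> \<rho> < \<epsilon> \<longrightarrow>
     (\<forall>t. \<bar>a' t - a t\<bar> \<le> c * \<rho> \<and> \<bar>b' t - b t\<bar> \<le> \<rho>) \<longrightarrow>
     (\<forall>t. a' t * y \<le> b' t) \<longrightarrow> c * (y - xb) \<le> \<kappa> * \<rho>"
      using sc_upper[OF c hF, of \<kappa>] kL by (auto simp: L_def)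
    have "\<forall>A B. param_norm N (A - A0) (B - b0) < \<epsilon> \<longrightarrow>
      (\<forall>x\<in>feas A B. ndist N x (feas A0 b0) \<le> ereal (\<kappa> * param_norm N (A - A0) (B - b0)))"
    proof (intro allI impI ballI)
      fix A :: "real^'n^'m" and B x
      assume pe: "param_norm N (A - A0) (B - b0) < \<epsilon>" and xf: "x \<in> feas A B"
      define \<rho> where "\<rho> = param_norm N (A - A0) (B - b0)"
      define y where "y = \<sigma> * x$i0"
      have p0: "0 \<le> \<rho>" "\<rho> < \<epsilon>" using pn0 pe by (auto simp: \<rho>_def)
        have p1: "\<forall>t. \<bar>\<sigma> * A $ t $ i0 - a t\<bar> \<le> c * \<rho> \<and> \<bar>B $ t - b t\<bar> \<le> \<rho>"
        proof
          fix t
          have "\<bar>\<sigma> * A $ t $ i0 - a t\<bar> = \<bar>A$t$i0 - A0$t$i0\<bar>"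
            by (simp add: a_def right_diff_distrib[symmetric] abs_mult sabs)
          thus "\<bar>\<sigma> * A $ t $ i0 - a t\<bar> \<le> c * \<rho> \<and> \<bar>B $ t - b t\<bar> \<le> \<rho>"
            using pnt[where A=A and B=B and t=t] by (simp add: \<rho>_def b_def)
        qed
        have p2: "\<forall>t. \<sigma> * A $ t $ i0 * y \<le> B $ t"
        proof
          fix t
          have e: "\<sigma> * A $ t $ i0 * y = A$t$i0 * x$i0" using sg by (simp add: y_def algebra_simps)
          have "A$t$i0 * x$i0 \<le> B$t" using xf feasD by blast
          thus "\<sigma> * A $ t $ i0 * y \<le> B $ t" by (simp only: e)
        qed
      have "c * (y - xb) \<le> \<kappa> * \<rho>" 
        using H[THEN spec[where x=\<rho>], THEN spec[where x="\<lambda>t. \<sigma> * A$t$i0"], THEN spec[where x="\<lambda>t. B$t"], THEN spec[where x=y]] p0 p1 p2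
        by blast
      show "ndist N x (feas A0 b0) \<le> ereal (\<kappa> * param_norm N (A - A0) (B - b0))"
      proof (cases "y \<le> xb")
        case True
        hence "x \<in> feas A0 b0" using hs by (simp add: y_def xb_def)
        hence "ndist N x (feas A0 b0) \<le> ereal (N (x - x))" by (rule ndist_le)
        also have "\<dots> \<le> ereal (\<kappa> * param_norm N (A - A0) (B - b0))"
          using pn0 kL Lpos by (simp add: isn_0[OF nN])
        finally show ?thesis .
      next
        case False
        have "xbar \<in> feas A0 b0" using hs by simp
        hence "ndist N x (feas A0 b0) \<le> ereal (N (x - xbar))" by (rule ndist_le)
        also have "N (x - xbar) = c * \<bar>y - xb\<bar>"
        proof -
          have "\<bar>y - xb\<bar> = \<bar>x$i0 - xbar$i0\<bar>" by (simp add: y_def xb_def right_diff_distrib[symmetric] abs_mult sabs)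
          thus ?thesis by (simp add: Nx)
        qed
        also have "\<dots> = c * (y - xb)" using False by simp
        also have "\<dots> \<le> \<kappa> * param_norm N (A - A0) (B - b0)" using \<open>c * (y - xb) \<le> \<kappa> * \<rho>\<close> by (simp add: \<rho>_def)
        finally show ?thesis by simp
      qed
    qed
    moreover have "0 \<le> \<kappa>" using kL Lpos by simp
    ultimately show ?thesis using e unfolding K_def by blast
  qed
  have C2: "L \<le> \<kappa>" if kK: "\<kappa> \<in> K" for \<kappa>
  proof (rule ccontr)
    assume "\<not> L \<le> \<kappa>" hence kL: "\<kappa> < L" by simp
    from kK obtain \<epsilon> where k0: "0 \<le> \<kappa>" and e: "\<epsilon> > 0" and H: "\<forall>A B.
      param_norm N (A - A0) (B - b0) < \<epsilon> \<longrightarrow>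
      (\<forall>x\<in>feas A B. ndist N x (feas A0 b0) \<le> ereal (\<kappa> * param_norm N (A - A0) (B - b0)))"
      unfolding K_def by blast
    obtain \<rho> a' b' y where r: "0 < \<rho>" "\<rho> < \<epsilon>" and B: "\<forall>t. \<bar>a' t - a t\<bar> \<le> c * \<rho> \<and> \<bar>b' t - b t\<bar> \<le> \<rho>"
      and fy: "\<forall>t. a' t * y \<le> b' t" and gap: "\<kappa> * \<rho> < c * (y - xb)"
      using sc_lower[OF c hF k0 _ e] kL by (auto simp: L_def)
    define A :: "real^'n^'m" where "A = (\<chi> t. (\<sigma> * a' t) *\<^sub>R vec 1)"
    define Bv :: "real^'m" where "Bv = (\<chi> t. b' t)"
    define x :: "real^'n" where "x = (\<sigma> * y) *\<^sub>R vec 1"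
    have Ai: "A$t$i0 = \<sigma> * a' t" for t by (simp add: A_def)
    have pnle: "param_norm N (A - A0) (Bv - b0) \<le> \<rho>"
    proof (rule pn_le)
      fix t
      have "\<bar>\<sigma> * a' t - A0$t$i0\<bar> = \<bar>a' t - a t\<bar>"
      proof -
        have "\<sigma> * a' t - A0$t$i0 = \<sigma> * (a' t - a t)" using sg by (simp add: a_def algebra_simps)
        thus ?thesis by (simp add: abs_mult sabs)
      qed
      hence "\<bar>\<sigma> * a' t - A0$t$i0\<bar> / c \<le> \<rho>" using B c by (simp add: pos_divide_le_eq mult.commute)
      thus "max (dual_norm N ((A - A0) $ t)) \<bar>(Bv - b0) $ t\<bar> \<le> \<rho>"
        using B by (simp add: dn Ai Bv_def b_def)
    qed
    have xf: "x \<in> feas A Bv"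
    proof -
      have "A$t$i0 * x$i0 \<le> Bv$t" for t
      proof -
        have "A$t$i0 * x$i0 = a' t * y" using sg by (simp add: Ai x_def algebra_simps)
        thus ?thesis using fy by (simp add: Bv_def)
      qed
      thus ?thesis using feasD by blast
    qed
    have "ndist N x (feas A0 b0) \<le> ereal (\<kappa> * param_norm N (A - A0) (Bv - b0))"
      using H pnle r xf by force
    also have "\<dots> \<le> ereal (\<kappa> * \<rho>)" using pnle k0 by (simp add: mult_left_mono)
    also have "\<dots> < ereal (c * (y - xb))" using gap by simp
    also have "ereal (c * (y - xb)) \<le> ndist N x (feas A0 b0)"
    proof (rule ndist_ge)
      fix \<omega> assume "\<omega> \<in> feas A0 b0"
      hence w: "\<sigma> * \<omega>$i0 \<le> xb" using hs by (simp add: xb_def)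
      have "\<bar>x$i0 - \<omega>$i0\<bar> = \<bar>y - \<sigma> * \<omega>$i0\<bar>"
      proof -
        have "y - \<sigma> * \<omega>$i0 = \<sigma> * (x$i0 - \<omega>$i0)" using sg by (simp add: x_def algebra_simps)
        thus ?thesis by (simp add: abs_mult sabs)
      qed
      hence "N (x - \<omega>) = c * \<bar>y - \<sigma> * \<omega>$i0\<bar>" by (simp add: Nx)
      moreover have "y - xb \<le> \<bar>y - \<sigma> * \<omega>$i0\<bar>" using w by linarith
      ultimately show "c * (y - xb) \<le> N (x - \<omega>)" using c by simp
    qed
    finally show False by simp
  qed
  have "Lipusc N A0 b0 = Inf (ereal ` K)" by (simp add: Lipusc_def K_def)
  also have "\<dots> = ereal L" by (rule Inf_eq_L[OF C1 C2])
  finally show ?thesis using RHS by simp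
qed



lemma recession:
  fixes a :: "'m::finite \<Rightarrow> real^'n" and b :: "'m \<Rightarrow> real"
  assumes unb: "\<not> (\<exists>M. \<forall>x. (\<forall>t. a t \<bullet> x \<le> b t) \<longrightarrow> norm x \<le> M)"
  shows "\<exists>d. d \<noteq> 0 \<and> (\<forall>t. a t \<bullet> d \<le> 0)"
proof -
  have "\<forall>k::nat. \<exists>y. (\<forall>t. a t \<bullet> y \<le> b t) \<and> norm y > real k + 1"
    using unb by (meson not_le)
  then obtain Y where Y: "\<And>k. (\<forall>t. a t \<bullet> Y k \<le> b t)" "\<And>k. norm (Y k) > real k + 1" by metis
  define u where "u k = (1 / norm (Y k)) *\<^sub>R Y k" for k
  have nY: "norm (Y k) > 0" for k using Y(2)[of k] by (smt (verit) of_nat_0_le_iff)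
  have us: "\<forall>k. u k \<in> sphere 0 1" using nY by (simp add: u_def)
  obtain l r where l: "l \<in> sphere (0::real^'n) 1" "strict_mono (r :: nat \<Rightarrow> nat)" "(u \<circ> r) \<longlonglongrightarrow> l"
    using seq_compactE[OF compact_imp_seq_compact[OF compact_sphere] us] by blast
  have "a t \<bullet> l \<le> 0" for t
  proof (rule LIMSEQ_le)
    show "(\<lambda>k. a t \<bullet> (u \<circ> r) k) \<longlonglongrightarrow> a t \<bullet> l" by (intro tendsto_inner tendsto_const l(3))
    show "(\<lambda>k. \<bar>b t\<bar> * inverse (real (Suc k))) \<longlonglongrightarrow> 0"
      using tendsto_mult[OF tendsto_const LIMSEQ_inverse_real_of_nat, of "\<bar>b t\<bar>"] by simp
    show "\<exists>N. \<forall>k\<ge>N. a t \<bullet> (u \<circ> r) k \<le> \<bar>b t\<bar> * inverse (real (Suc k))"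
    proof (intro exI allI impI)
      fix k :: nat
      let ?y = "Y (r k)"
      have "real k \<le> real (r k)" using seq_suble[OF l(2)] by simp
      hence ny: "norm ?y \<ge> real (Suc k)" using Y(2)[of "r k"] by simp
      have "a t \<bullet> (u \<circ> r) k = (a t \<bullet> ?y) / norm ?y" by (simp add: u_def)
      also have "\<dots> \<le> \<bar>b t\<bar> / norm ?y"
      proof -
        have "a t \<bullet> ?y \<le> \<bar>b t\<bar>" using Y(1)[of "r k"] by (meson abs_ge_self order_trans)
        thus ?thesis using nY[of "r k"] by (intro divide_right_mono) auto
      qed
      also have "\<dots> \<le> \<bar>b t\<bar> / real (Suc k)" using ny nY[of "r k"] by (intro divide_left_mono mult_pos_pos) auto
      finally show "a t \<bullet> (u \<circ> r) k \<le> \<bar>b t\<bar> * inverse (real (Suc k))" by (simp add: divide_inverse)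
    qed
  qed
  moreover have "l \<noteq> 0" using l(1) by auto
  ultimately show ?thesis by blast
qed

lemma tight:
  fixes a :: "'m::finite \<Rightarrow> real^'n"
  assumes d0: "d0 \<noteq> 0" "\<forall>t. a t \<bullet> d0 \<le> 0" and t1: "a t1 \<noteq> 0" and dim: "2 \<le> CARD('n)"
  shows "\<exists>d t0. d \<noteq> 0 \<and> (\<forall>t. a t \<bullet> d \<le> 0) \<and> a t0 \<noteq> 0 \<and> a t0 \<bullet> d = 0"
proof (cases "\<exists>t. a t \<noteq> 0 \<and> a t \<bullet> d0 = 0")
  case True
  then show ?thesis using d0 by blast
next
  case False
  hence neg: "a t \<bullet> d0 < 0" if "a t \<noteq> 0" for t using d0(2) that by (meson order_le_less)
  obtain u :: "real^'n" where u: "u \<noteq> 0" "orthogonal d0 u"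
    using orthogonal_to_vector_exists[of d0] dim by auto
  have ud: "u \<bullet> d0 = 0" using u(2) by (simp add: orthogonal_def inner_commute)
  define \<mu> where "\<mu> = (if a t1 \<bullet> u = 0 then 1 else (0::real))"
  define w where "w = a t1 + \<mu> *\<^sub>R u"
  have a1w: "a t1 \<bullet> w > 0" using t1 by (simp add: w_def \<mu>_def inner_add_right)
  define I where "I = {t. a t \<bullet> w > 0}"
  have t1I: "t1 \<in> I" using a1w by (simp add: I_def)
  define f where "f t = - (a t \<bullet> d0) / (a t \<bullet> w)" for t
  have fpos: "f t > 0" if "t \<in> I" for t
  proof -
    have "a t \<noteq> 0" using that by (auto simp: I_def)
    hence "- (a t \<bullet> d0) > 0" using neg by simp
    moreover have "a t \<bullet> w > 0" using that by (simp add: I_def)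
    ultimately show ?thesis unfolding f_def by (rule divide_pos_pos)
  qed
  define \<tau> where "\<tau> = Min (f ` I)"
  have finI: "finite (f ` I)" by simp
  have neI: "f ` I \<noteq> {}" using t1I by blast
  obtain t0 where t0: "t0 \<in> I" "\<tau> = f t0" using Min_in[OF finI neI] by (auto simp: \<tau>_def)
  have tle: "\<tau> \<le> f t" if "t \<in> I" for t using that by (simp add: \<tau>_def)
  have tpos: "\<tau> > 0" using t0 fpos by simp
  define d where "d = d0 + \<tau> *\<^sub>R w"
  have all: "a t \<bullet> d \<le> 0" for t
  proof (cases "t \<in> I")
    case True
    hence aw: "a t \<bullet> w > 0" by (simp add: I_def)
    have "\<tau> * (a t \<bullet> w) \<le> f t * (a t \<bullet> w)" using tle[OF True] aw by (intro mult_right_mono) auto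
    also have "\<dots> = - (a t \<bullet> d0)" using aw by (simp add: f_def)
    finally show ?thesis by (simp add: d_def inner_add_right)
  next
    case False
    hence "a t \<bullet> w \<le> 0" by (simp add: I_def)
    hence "\<tau> * (a t \<bullet> w) \<le> 0" using tpos by (simp add: mult_nonneg_nonpos)
    thus ?thesis using d0(2) by (simp add: d_def inner_add_right add_nonpos_nonpos)
  qed
  have a0: "a t0 \<bullet> d = 0"
  proof -
    have aw: "a t0 \<bullet> w > 0" using t0 by (simp add: I_def)
    have "\<tau> * (a t0 \<bullet> w) = - (a t0 \<bullet> d0)" using aw t0(2) by (simp add: f_def)
    thus ?thesis by (simp add: d_def inner_add_right)
  qed
  have "a t0 \<noteq> 0" using t0 by (auto simp: I_def)
  moreover have "d \<noteq> 0"
  proof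
    assume "d = 0"
    hence "u \<bullet> (d0 + \<tau> *\<^sub>R w) = 0" by (simp add: d_def)
    hence "u \<bullet> d0 + \<tau> * (u \<bullet> w) = 0" by (simp add: inner_add_right)
    hence "u \<bullet> w = 0" using ud tpos by simp
    moreover have "u \<bullet> w \<noteq> 0"
      using u(1) by (auto simp: w_def \<mu>_def inner_add_right inner_commute)
    ultimately show False by simp
  qed
  ultimately show ?thesis using all a0 by blast
qed

lemma halfline:
  fixes a b :: "'m::finite \<Rightarrow> real"
  assumes x0: "\<forall>t. a t * x0 \<le> b t" and nu: "\<not> (\<forall>x. \<forall>t. a t * x \<le> b t)"
    and unb: "\<not> (\<exists>M. \<forall>x. (\<forall>t. a t * x \<le> b t) \<longrightarrow> \<bar>x\<bar> \<le> M)"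
  shows "\<exists>xb. (\<forall>x. (\<forall>t. a t * x \<le> b t) \<longleftrightarrow> x \<le> xb) \<or> (\<forall>x. (\<forall>t. a t * x \<le> b t) \<longleftrightarrow> xb \<le> x)"
proof -
  define U where "U = {t. a t > 0}"
  define W where "W = {t. a t < 0}"
  have z: "0 \<le> b t" if "a t = 0" for t using x0 that by (metis mult_zero_left)
  have upU: "a t * x \<le> b t \<longleftrightarrow> x \<le> b t / a t" if "t \<in> U" for t x
    using that by (simp add: U_def pos_le_divide_eq mult.commute)
  have upW: "a t * x \<le> b t \<longleftrightarrow> b t / a t \<le> x" if "t \<in> W" for t x
    using that by (simp add: W_def neg_divide_le_eq mult.commute)
  show ?thesis
  proof (cases "U = {}")
    case Ue: True
    show ?thesis
    proof (cases "W = {}")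
      case True
      have "\<forall>x. \<forall>t. a t * x \<le> b t"
      proof (intro allI)
        fix x t
        have "a t = 0" using Ue True by (auto simp: U_def W_def) (metis linorder_neqE_linordered_idom)
        thus "a t * x \<le> b t" using z by simp
      qed
      thus ?thesis using nu by blast
    next
      case False
      define xb where "xb = Max ((\<lambda>t. b t / a t) ` W)"
      have "(\<forall>t. a t * x \<le> b t) \<longleftrightarrow> xb \<le> x" for x
      proof -
        have "(\<forall>t. a t * x \<le> b t) \<longleftrightarrow> (\<forall>t\<in>W. b t / a t \<le> x)"
        proof
          assume "\<forall>t. a t * x \<le> b t" thus "\<forall>t\<in>W. b t / a t \<le> x" using upW by blast
        next
          assume H: "\<forall>t\<in>W. b t / a t \<le> x"
          show "\<forall>t. a t * x \<le> b t"
          proof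
            fix t show "a t * x \<le> b t"
            proof (cases "t \<in> W")
              case True thus ?thesis using H upW by blast
            next
              case False
              have "\<not> a t > 0" using Ue by (auto simp: U_def)
              moreover have "\<not> a t < 0" using False by (simp add: W_def)
              ultimately have "a t = 0" by linarith
              thus ?thesis using z by simp
            qed
          qed
        qed
        also have "\<dots> \<longleftrightarrow> xb \<le> x" using False by (simp add: xb_def)
        finally show ?thesis .
      qed
      thus ?thesis by blast
    qed
  next
    case Une: False
    show ?thesis
    proof (cases "W = {}")
      case True
      define xb where "xb = Min ((\<lambda>t. b t / a t) ` U)"
      have "(\<forall>t. a t * x \<le> b t) \<longleftrightarrow> x \<le> xb" for x
      proof -
        have "(\<forall>t. a t * x \<le> b t) \<longleftrightarrow> (\<forall>t\<in>U. x \<le> b t / a t)"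
        proof
          assume "\<forall>t. a t * x \<le> b t" thus "\<forall>t\<in>U. x \<le> b t / a t" using upU by blast
        next
          assume H: "\<forall>t\<in>U. x \<le> b t / a t"
          show "\<forall>t. a t * x \<le> b t"
          proof
            fix t show "a t * x \<le> b t"
            proof (cases "t \<in> U")
              case True thus ?thesis using H upU by blast
            next
              case False
              have "\<not> a t > 0" using False by (auto simp: U_def)
              moreover have "\<not> a t < 0" using True by (simp add: W_def)
              ultimately have "a t = 0" by linarith
              thus ?thesis using z by simp
            qed
          qed
        qed
        also have "\<dots> \<longleftrightarrow> x \<le> xb" using Une by (simp add: xb_def)
        finally show ?thesis .
      qed
      thus ?thesis by blast
    next
      case False
      obtain tu tw where tu: "tu \<in> U" and tw: "tw \<in> W" using Une False by blast
      have "\<forall>x. (\<forall>t. a t * x \<le> b t) \<longrightarrow> \<bar>x\<bar> \<le> \<bar>b tu / a tu\<bar> + \<bar>b tw / a tw\<bar>"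
      proof (intro allI impI)
        fix x assume "\<forall>t. a t * x \<le> b t"
        hence "x \<le> b tu / a tu" "b tw / a tw \<le> x" using upU[OF tu] upW[OF tw] by blast+
        thus "\<bar>x\<bar> \<le> \<bar>b tu / a tu\<bar> + \<bar>b tw / a tw\<bar>" by linarith
      qed
      thus ?thesis using unb by blast
    qed
  qed
qed



lemma blowup:
  fixes N :: "real^'n \<Rightarrow> real" and A0 :: "real^'n^'m::finite" and b0 :: "real^'m"
  assumes nN: "is_norm N" and m: "m > 0" "\<forall>x. m * norm x \<le> N x"
    and x0: "x0 \<in> feas A0 b0" and d: "d \<noteq> 0" "\<forall>t. A0$t \<bullet> d \<le> 0"
    and t0: "A0$t0 \<noteq> 0" "A0$t0 \<bullet> d = 0" and k0: "0 \<le> \<kappa>" and e: "\<epsilon> > 0"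
  shows "\<exists>A x. param_norm N (A - A0) (b0 - b0) < \<epsilon> \<and> x \<in> feas A b0 \<and>
     ereal (\<kappa> * \<epsilon>) < ndist N x (feas A0 b0)"
proof -
  define ev where "ev = A0$t0"
  define l where "l = (1 / (d \<bullet> d)) *\<^sub>R d"
  have dd: "d \<bullet> d > 0" using d(1) by simp
  have ee: "ev \<bullet> ev > 0" using t0(1) by (simp add: ev_def)
  have ld: "l \<bullet> d = 1" using dd by (simp add: l_def)
  have le: "l \<bullet> ev = 0" using t0(2) by (simp add: l_def ev_def inner_commute)
  define lam where "lam t = \<bar>A0$t \<bullet> ev\<bar>" for t
  define G where "G = (\<Sum>t\<in>UNIV. lam t) * norm l / m + 1"
  have sl: "0 \<le> (\<Sum>t\<in>UNIV. lam t)" by (simp add: lam_def sum_nonneg)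
  have G: "G > 0" using sl m by (simp add: G_def add_nonneg_pos)
  define \<delta> where "\<delta> = \<epsilon> / G"
  have dl: "\<delta> > 0" using e G by (simp add: \<delta>_def)
  define A :: "real^'n^'m" where "A = (\<chi> t. A0$t - (\<delta> * lam t) *\<^sub>R l)"
  have pn: "param_norm N (A - A0) (b0 - b0) < \<epsilon>"
  proof (rule pn_less)
    fix t
    have "(A - A0)$t = - ((\<delta> * lam t) *\<^sub>R l)" by (simp add: A_def)
    hence "dual_norm N ((A - A0)$t) \<le> norm (- ((\<delta> * lam t) *\<^sub>R l)) / m"
      using dual_le[OF nN m, of "- ((\<delta> * lam t) *\<^sub>R l)"] by (simp only:)
    also have "\<dots> = \<delta> * (lam t * norm l / m)" using dl by (simp add: lam_def abs_mult)
    also have "\<dots> \<le> \<delta> * (G - 1)"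
    proof -
      have "lam t \<le> (\<Sum>t\<in>UNIV. lam t)" by (rule member_le_sum) (auto simp: lam_def)
      hence "lam t * norm l / m \<le> (\<Sum>t\<in>UNIV. lam t) * norm l / m" using m
        by (intro divide_right_mono mult_right_mono) auto
      hence "\<delta> * (lam t * norm l / m) \<le> \<delta> * ((\<Sum>t\<in>UNIV. lam t) * norm l / m)"
        using dl by (intro mult_left_mono) auto
      thus ?thesis by (simp add: G_def)
    qed
    also have "\<dots> < \<delta> * G" using dl by simp
    also have "\<delta> * G = \<epsilon>" using G by (simp add: \<delta>_def)
    finally show "max (dual_norm N ((A - A0) $ t)) \<bar>(b0 - b0) $ t\<bar> < \<epsilon>" using e by simp
  qed
  define S where "S = ((\<kappa> * \<epsilon> + 1) * norm ev / m + \<bar>ev \<bullet> x0 - b0$t0\<bar>) / (ev \<bullet> ev)"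
  have S0: "S \<ge> 0" using m ee k0 e by (simp add: S_def)
  define R where "R = \<bar>l \<bullet> x0\<bar> + S / \<delta>"
  have R0: "R \<ge> 0" using S0 dl by (simp add: R_def)
  define s where "s = \<delta> * (l \<bullet> x0 + R)"
  have sS: "s \<ge> S"
  proof -
    have "s = \<delta> * (l \<bullet> x0 + \<bar>l \<bullet> x0\<bar>) + S" using dl by (simp add: s_def R_def algebra_simps)
    moreover have "\<delta> * (l \<bullet> x0 + \<bar>l \<bullet> x0\<bar>) \<ge> 0" using dl by simp
    ultimately show ?thesis by linarith
  qed
  define x where "x = x0 + R *\<^sub>R d + s *\<^sub>R ev"
  have lx: "l \<bullet> x = l \<bullet> x0 + R" by (simp add: x_def inner_add_right ld le)
  have xf: "x \<in> feas A b0" unfolding feas_def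
  proof (intro CollectI allI)
    fix t
    have "A0$t \<bullet> x = A0$t \<bullet> x0 + R * (A0$t \<bullet> d) + s * (A0$t \<bullet> ev)" by (simp add: x_def inner_add_right)
    also have "\<dots> \<le> b0$t + 0 + s * lam t"
    proof -
      have "A0$t \<bullet> x0 \<le> b0$t" using x0 by (simp add: feas_def)
      moreover have "R * (A0$t \<bullet> d) \<le> 0" using R0 d(2) by (simp add: mult_nonneg_nonpos)
      moreover have "s * (A0$t \<bullet> ev) \<le> s * lam t" using sS S0 by (intro mult_left_mono) (auto simp: lam_def)
      ultimately show ?thesis by linarith
    qed
    finally have "A0$t \<bullet> x \<le> b0$t + s * lam t" by simp
    moreover have "A$t \<bullet> x = A0$t \<bullet> x - \<delta> * lam t * (l \<bullet> x)" by (simp add: A_def inner_diff_left)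
    moreover have "\<delta> * lam t * (l \<bullet> x) = s * lam t" by (simp add: lx s_def)
    ultimately show "A$t \<bullet> x \<le> b0$t" by linarith
  qed
  have "ereal (\<kappa> * \<epsilon> + 1) \<le> ndist N x (feas A0 b0)"
  proof (rule ndist_ge)
    fix \<omega> assume "\<omega> \<in> feas A0 b0"
    hence w: "ev \<bullet> \<omega> \<le> b0$t0" by (simp add: feas_def ev_def)
    have "ev \<bullet> x = ev \<bullet> x0 + s * (ev \<bullet> ev)" by (simp add: x_def inner_add_right ev_def t0(2))
    moreover have "s * (ev \<bullet> ev) \<ge> S * (ev \<bullet> ev)" using sS ee by (intro mult_right_mono) auto
    moreover have "S * (ev \<bullet> ev) = (\<kappa> * \<epsilon> + 1) * norm ev / m + \<bar>ev \<bullet> x0 - b0$t0\<bar>" using ee by (simp add: S_def)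
    ultimately have "ev \<bullet> (x - \<omega>) \<ge> (\<kappa> * \<epsilon> + 1) * norm ev / m" using w by (simp add: inner_diff_right)
    moreover have "ev \<bullet> (x - \<omega>) \<le> norm ev * norm (x - \<omega>)" by (rule order_trans[OF abs_ge_self Cauchy_Schwarz_ineq2])
    moreover have "norm ev * norm (x - \<omega>) \<le> norm ev * (N (x - \<omega>) / m)"
      using m by (intro mult_left_mono) (auto simp: pos_le_divide_eq mult.commute)
    ultimately have "(\<kappa> * \<epsilon> + 1) * norm ev / m \<le> norm ev * (N (x - \<omega>) / m)" by linarith
    hence "(\<kappa> * \<epsilon> + 1) * norm ev / m \<le> (norm ev * N (x - \<omega>)) / m" by simp
    hence "(\<kappa> * \<epsilon> + 1) * norm ev \<le> norm ev * N (x - \<omega>)" using m(1) by (simp only: divide_le_cancel)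
    moreover have "norm ev > 0" using t0(1) by (simp add: ev_def)
    ultimately show "\<kappa> * \<epsilon> + 1 \<le> N (x - \<omega>)" by (simp add: mult.commute)
  qed
  hence "ereal (\<kappa> * \<epsilon>) < ndist N x (feas A0 b0)" by (rule less_le_trans[rotated]) simp
  thus ?thesis using pn xf by blast
qed



lemma part3:
  fixes N :: "real^'n \<Rightarrow> real" and A0 :: "real^'n^'m::finite" and b0 :: "real^'m"
  assumes nN: "is_norm N" and ne: "feas A0 b0 \<noteq> {}"
    and unb: "\<not> (\<exists>M. \<forall>x\<in>feas A0 b0. N x \<le> M)" and nU: "feas A0 b0 \<noteq> UNIV"
    and dim: "CARD('n) \<noteq> 1"
  shows "Lipusc N A0 b0 = \<infinity>"
proof -
  obtain m where m: "m > 0" "\<forall>x. m * norm x \<le> N x" using N_lower[OF nN] by blast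
  obtain B where B: "B \<ge> 0" "\<forall>x. N x \<le> B * norm x" using N_upper[OF nN] by blast
  obtain x0 where x0: "x0 \<in> feas A0 b0" using ne by blast
  have unbE: "\<not> (\<exists>M. \<forall>x. (\<forall>t. A0$t \<bullet> x \<le> b0$t) \<longrightarrow> norm x \<le> M)"
  proof
    assume "\<exists>M. \<forall>x. (\<forall>t. A0$t \<bullet> x \<le> b0$t) \<longrightarrow> norm x \<le> M"
    then obtain M where M: "\<forall>x. (\<forall>t. A0$t \<bullet> x \<le> b0$t) \<longrightarrow> norm x \<le> M" by blast
    have "\<forall>x\<in>feas A0 b0. N x \<le> B * M"
    proof
      fix x assume "x \<in> feas A0 b0"
      hence "norm x \<le> M" using M by (simp add: feas_def)
      hence "B * norm x \<le> B * M" using B(1) by (simp add: mult_left_mono)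
      thus "N x \<le> B * M" using B(2) order_trans by blast
    qed
    thus False using unb by blast
  qed
  obtain d0 where d0: "d0 \<noteq> 0" "\<forall>t. A0$t \<bullet> d0 \<le> 0"
    using recession[of "\<lambda>t. A0$t" "\<lambda>t. b0$t"] unbE by blast
  obtain t1 where t1: "A0$t1 \<noteq> 0"
  proof (rule ccontr)
    assume "\<not> thesis"
    hence z: "\<forall>t. A0$t = 0" using that by blast
    have "\<forall>x. x \<in> feas A0 b0"
    proof
      fix x
      have "0 \<le> b0$t" for t
      proof -
        have "A0$t \<bullet> x0 \<le> b0$t" using x0 by (simp add: feas_def)
        thus ?thesis using z by simp
      qed
      thus "x \<in> feas A0 b0" using z by (simp add: feas_def)
    qed
    thus False using nU by blast
  qed
  have dim2: "2 \<le> CARD('n)"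
  proof -
    have "0 < CARD('n)" by simp
    thus ?thesis using dim by linarith
  qed
  obtain d t0 where d: "d \<noteq> 0" "\<forall>t. A0$t \<bullet> d \<le> 0" and t0: "A0$t0 \<noteq> 0" "A0$t0 \<bullet> d = 0"
    using tight[of d0 "\<lambda>t. A0$t" t1] d0 t1 dim2 by blast
  define K where "K = {\<kappa>. 0 \<le> \<kappa> \<and> (\<exists>\<epsilon>>0. \<forall>A b.
      param_norm N (A - A0) (b - b0) < \<epsilon> \<longrightarrow>
      (\<forall>x\<in>feas A b. ndist N x (feas A0 b0) \<le> ereal (\<kappa> * param_norm N (A - A0) (b - b0))))}"
  have "K = {}"
  proof (rule ccontr)
    assume "K \<noteq> {}"
    then obtain \<kappa> \<epsilon> where k0: "0 \<le> \<kappa>" and e: "\<epsilon> > 0" and H: "\<forall>A b.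
      param_norm N (A - A0) (b - b0) < \<epsilon> \<longrightarrow>
      (\<forall>x\<in>feas A b. ndist N x (feas A0 b0) \<le> ereal (\<kappa> * param_norm N (A - A0) (b - b0)))"
      unfolding K_def by blast
    obtain A x where pn: "param_norm N (A - A0) (b0 - b0) < \<epsilon>" and xf: "x \<in> feas A b0"
      and gt: "ereal (\<kappa> * \<epsilon>) < ndist N x (feas A0 b0)"
      using blowup[OF nN m x0 d t0 k0 e] by blast
    have "ndist N x (feas A0 b0) \<le> ereal (\<kappa> * param_norm N (A - A0) (b0 - b0))"
      using H pn xf by blast
    also have "\<dots> \<le> ereal (\<kappa> * \<epsilon>)" using pn k0 by (simp add: mult_left_mono)
    finally show False using gt by simp
  qed
  thus ?thesis by (simp add: Lipusc_def K_def[symmetric] top_ereal_def)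
qed

lemma part1:
  fixes N :: "real^'n \<Rightarrow> real" and A0 :: "real^'n^'m::finite" and b0 :: "real^'m"
  assumes nN: "is_norm N" and U: "feas A0 b0 = UNIV"
  shows "Lipusc N A0 b0 = 0"
proof -
  define K where "K = {\<kappa>. 0 \<le> \<kappa> \<and> (\<exists>\<epsilon>>0. \<forall>A b.
      param_norm N (A - A0) (b - b0) < \<epsilon> \<longrightarrow>
      (\<forall>x\<in>feas A b. ndist N x (feas A0 b0) \<le> ereal (\<kappa> * param_norm N (A - A0) (b - b0))))}"
  have C1: "\<kappa> \<in> K" if "\<kappa> > 0" for \<kappa>
  proof -
    have "ndist N x (feas A0 b0) \<le> ereal (\<kappa> * param_norm N (A - A0) (b - b0))" for x A b
    proof -
      have "ndist N x (feas A0 b0) \<le> ereal (N (x - x))" using U by (intro ndist_le) simp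
      also have "\<dots> = 0" by (simp add: isn_0[OF nN])
      also have "\<dots> \<le> ereal (\<kappa> * param_norm N (A - A0) (b - b0))"
      proof -
        have "0 \<le> param_norm N (A - A0) (b - b0)"
          using pn_ge[where N=N and A="A - A0" and b="b - b0"] by (meson abs_ge_zero max.bounded_iff order_trans)
        thus ?thesis using that by simp
      qed
      finally show ?thesis .
    qed
    thus ?thesis using that unfolding K_def by (auto intro!: exI[of _ 1])
  qed
  have C2: "0 \<le> \<kappa>" if "\<kappa> \<in> K" for \<kappa> using that by (simp add: K_def)
  have "Lipusc N A0 b0 = Inf (ereal ` K)" by (simp add: Lipusc_def K_def)
  also have "\<dots> = ereal 0" by (rule Inf_eq_L[OF C1 C2])
  finally show ?thesis by (simp add: zero_ereal_def)
qed

theorem proposition2: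
  fixes N :: "real^'n \<Rightarrow> real"
    and A0 :: "real^'n^'m::finite" and b0 :: "real^'m"
  assumes "is_norm N"
    and "feas A0 b0 \<noteq> {}"
    and "\<not> (\<exists>M. \<forall>x\<in>feas A0 b0. N x \<le> M)"
  shows "(feas A0 b0 = UNIV \<longrightarrow> Lipusc N A0 b0 = 0)
    \<and> (\<forall>xbar. CARD('n) = 1 \<and>
          (feas A0 b0 = {x. \<forall>i. x $ i \<le> xbar $ i} \<or> feas A0 b0 = {x. \<forall>i. xbar $ i \<le> x $ i})
        \<longrightarrow> Lipusc N A0 b0 =
            ereal ((N xbar + 1) / Max ((\<lambda>t. dual_norm N (A0 $ t)) ` active A0 b0 xbar)))
    \<and> (feas A0 b0 \<noteq> UNIV \<and>
        \<not> (\<exists>xbar. CARD('n) = 1 \<and>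
          (feas A0 b0 = {x. \<forall>i. x $ i \<le> xbar $ i} \<or> feas A0 b0 = {x. \<forall>i. xbar $ i \<le> x $ i}))
        \<longrightarrow> Lipusc N A0 b0 = \<infinity>)"
proof (intro conjI impI allI)
  assume "feas A0 b0 = UNIV"
  thus "Lipusc N A0 b0 = 0" using part1[OF assms(1)] by blast
next
  fix xbar :: "real^'n"
  assume H: "CARD('n) = 1 \<and>
          (feas A0 b0 = {x. \<forall>i. x $ i \<le> xbar $ i} \<or> feas A0 b0 = {x. \<forall>i. xbar $ i \<le> x $ i})"
  obtain i0 :: 'n where "UNIV = {i0}" using H card_1_singletonE by blast
  hence i0: "\<forall>i::'n. i = i0" by auto
  show "Lipusc N A0 b0 =
            ereal ((N xbar + 1) / Max ((\<lambda>t. dual_norm N (A0 $ t)) ` active A0 b0 xbar))"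
  proof (cases "feas A0 b0 = {x. \<forall>i. x $ i \<le> xbar $ i}")
    case True
    have hs: "\<forall>x. x \<in> feas A0 b0 \<longleftrightarrow> 1 * x$i0 \<le> 1 * xbar$i0" using True i0 by auto
    have "1 * 1 = (1::real)" by simp
    from part2[OF assms(1) i0 this hs] show ?thesis .
  next
    case False
    hence F: "feas A0 b0 = {x. \<forall>i. xbar $ i \<le> x $ i}" using H by blast
    have hs: "\<forall>x. x \<in> feas A0 b0 \<longleftrightarrow> (-1) * x$i0 \<le> (-1) * xbar$i0" using F i0 by auto
    have "(-1) * (-1) = (1::real)" by simp
    from part2[OF assms(1) i0 this hs] show ?thesis .
  qed
next
  assume H: "feas A0 b0 \<noteq> UNIV \<and>
        \<not> (\<exists>xbar. CARD('n) = 1 \<and>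
          (feas A0 b0 = {x. \<forall>i. x $ i \<le> xbar $ i} \<or> feas A0 b0 = {x. \<forall>i. xbar $ i \<le> x $ i}))"
  show "Lipusc N A0 b0 = \<infinity>"
  proof (cases "CARD('n) = 1")
    case False
    thus ?thesis using part3[OF assms] H by blast
  next
    case True
    obtain i0 :: 'n where "UNIV = {i0}" using True card_1_singletonE by blast
    hence i0: "\<forall>i::'n. i = i0" by auto
    have inn: "u \<bullet> x = u$i0 * x$i0" for u x :: "real^'n" by (rule od_inner[OF i0])
    have feasD: "x \<in> feas A0 b0 \<longleftrightarrow> (\<forall>t. A0$t$i0 * x$i0 \<le> b0$t)" for x
      by (simp add: feas_def inn)
    define c where "c = N (vec 1)"
    have c: "c > 0" unfolding c_def by (rule od_c[OF assms(1)])
    have Nx: "N x = c * \<bar>x$i0\<bar>" for x using od_N[OF assms(1) i0, of x] by (simp add: c_def)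
    have vi: "((r::real) *\<^sub>R (vec 1 :: real^'n))$i0 = r" for r by simp
    obtain x0 where x0: "x0 \<in> feas A0 b0" using assms(2) by blast
    have s1: "\<forall>t. A0$t$i0 * x0$i0 \<le> b0$t" using x0 feasD by blast
    have s2: "\<not> (\<forall>y. \<forall>t. A0$t$i0 * y \<le> b0$t)"
    proof
      assume "\<forall>y. \<forall>t. A0$t$i0 * y \<le> b0$t"
      hence "\<forall>x. x \<in> feas A0 b0" using feasD by blast
      thus False using H by blast
    qed
    have s3: "\<not> (\<exists>M. \<forall>y. (\<forall>t. A0$t$i0 * y \<le> b0$t) \<longrightarrow> \<bar>y\<bar> \<le> M)"
    proof
      assume "\<exists>M. \<forall>y. (\<forall>t. A0$t$i0 * y \<le> b0$t) \<longrightarrow> \<bar>y\<bar> \<le> M"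
      then obtain M where M: "\<forall>y. (\<forall>t. A0$t$i0 * y \<le> b0$t) \<longrightarrow> \<bar>y\<bar> \<le> M" by blast
      have "\<forall>x\<in>feas A0 b0. N x \<le> c * M"
      proof
        fix x assume "x \<in> feas A0 b0"
        hence "\<bar>x$i0\<bar> \<le> M" using M feasD by blast
        thus "N x \<le> c * M" using c by (simp add: Nx)
      qed
      thus False using assms(3) by blast
    qed
    obtain xb where xb: "(\<forall>y. (\<forall>t. A0$t$i0 * y \<le> b0$t) \<longleftrightarrow> y \<le> xb) \<or>
        (\<forall>y. (\<forall>t. A0$t$i0 * y \<le> b0$t) \<longleftrightarrow> xb \<le> y)"
      using halfline[OF s1 s2 s3] by blast
    define xbar :: "real^'n" where "xbar = xb *\<^sub>R vec 1"
    have "feas A0 b0 = {x. \<forall>i. x $ i \<le> xbar $ i} \<or> feas A0 b0 = {x. \<forall>i. xbar $ i \<le> x $ i}"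
    proof (rule disjE[OF xb])
      assume h: "\<forall>y. (\<forall>t. A0$t$i0 * y \<le> b0$t) \<longleftrightarrow> y \<le> xb"
      have "feas A0 b0 = {x. \<forall>i. x $ i \<le> xbar $ i}"
      proof (rule set_eqI)
        fix x
        have "x \<in> feas A0 b0 \<longleftrightarrow> x$i0 \<le> xb" using feasD h by blast
        also have "\<dots> \<longleftrightarrow> (\<forall>i. x $ i \<le> xbar $ i)" using i0 by (auto simp: xbar_def)
        finally show "x \<in> feas A0 b0 \<longleftrightarrow> x \<in> {x. \<forall>i. x $ i \<le> xbar $ i}" by simp
      qed
      thus ?thesis by blast
    next
      assume h: "\<forall>y. (\<forall>t. A0$t$i0 * y \<le> b0$t) \<longleftrightarrow> xb \<le> y"
      have "feas A0 b0 = {x. \<forall>i. xbar $ i \<le> x $ i}"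
      proof (rule set_eqI)
        fix x
        have "x \<in> feas A0 b0 \<longleftrightarrow> xb \<le> x$i0" using feasD h by blast
        also have "\<dots> \<longleftrightarrow> (\<forall>i. xbar $ i \<le> x $ i)" using i0 by (auto simp: xbar_def)
        finally show "x \<in> feas A0 b0 \<longleftrightarrow> x \<in> {x. \<forall>i. xbar $ i \<le> x $ i}" by simp
      qed
      thus ?thesis by blast
    qed
    thus ?thesis using H True by blast
  qed
qed

end
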